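(* For $n\in\mathbb{N}$, $z(n)=f(n)$ if and only if $n=0$ or $n=F_{2k+1}$ for some integer $k\ge0$.
   Context: $\mathbb{N}=\{0,1,2,\dots\}$. Fibonacci numbers: $F_0=0$, $F_1=1$, $F_k=F_{k-1}+F_{k-2}$. The sequence $f:\mathbb{N}\to\mathbb{N}$ is defined greedily: $f(0)=0$, and for $n\ge1$, $f(n)$ is the least natural number such that (i) $f(n)\notin\{f(0),f(1),\dots,f(n-1)\}$ and (ii) $\sum_{1\le i\le n} f(i)$ is divisible by $n$. The sequence $z:\mathbb{N}\to\mathbb{N}$ is defined greedily: $z(0)=0$, and for $n\ge1$, $z(n)$ is the least natural number such that (i) $z(n)\notin\{z(0),\dots,z(n-1)\}$ and (ii) $\sum_{2\le i\le n} z(i)$ is divisible by $n+1$ (the empty sum being $0$). *)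

theory Defs
  imports Main "HOL-Number_Theory.Fib"
begin

fun fvals :: "nat \<Rightarrow> nat list" where
  "fvals 0 = [0]"
| "fvals (Suc n) = fvals n @
     [LEAST v. v \<notin> set (fvals n) \<and> Suc n dvd (sum_list (tl (fvals n)) + v)]"

definition fseq :: "nat \<Rightarrow> nat" where
  "fseq n = last (fvals n)"

text \<open>zvals n = [z 0, ..., z n]; condition: sum over 2 \<le> i \<le> n of z i divisible by n+1.\<close>
fun zvals :: "nat \<Rightarrow> nat list" where
  "zvals 0 = [0]"
| "zvals (Suc n) = zvals n @
     [LEAST v. v \<notin> set (zvals n) \<and>
        (Suc n + 1) dvd (if Suc n \<ge> 2 then sum_list (drop 2 (zvals n)) + v else 0)]"

definition zseq :: "nat \<Rightarrow> nat" where
  "zseq n = last (zvals n)"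

end

theory Submission
  imports Defs
begin


definition al :: real where "al = (sqrt 5 - 1) / 2"

lemma sqrt5_sq: "sqrt 5 * sqrt 5 = (5::real)" by simp

lemma al_sq: "al * al = 1 - al"
proof -
  have "al * al = (sqrt 5 * sqrt 5 - 2 * sqrt 5 + 1) / 4" unfolding al_def by (simp add: field_simps)
  also have "\<dots> = 1 - al" unfolding al_def sqrt5_sq by (simp add: field_simps)
  finally show ?thesis .
qed

lemma sqrt5_bounds: "2.2 < sqrt (5::real)" "sqrt (5::real) < 2.25"
proof -
  have "sqrt (2.2^2) < sqrt (5::real)" by (intro real_sqrt_less_mono) (simp add: power2_eq_square)
  then show "2.2 < sqrt (5::real)" by simp
  have "sqrt (5::real) < sqrt (2.25^2)" by (intro real_sqrt_less_mono) (simp add: power2_eq_square)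
  then show "sqrt (5::real) < 2.25" by simp
qed

lemma al_bounds: "0.6 < al" "al < 0.625"
  using sqrt5_bounds unfolding al_def by auto

lemma no_sq5: "(r::int)^2 = 5 * m^2 \<Longrightarrow> m = 0"
proof (induction "nat \<bar>m\<bar>" arbitrary: r m rule: less_induct)
  case less
  have "r^2 mod 5 = 0" using less.prems by simp
  hence "((r mod 5)^2) mod 5 = 0" by (metis power_mod)
  moreover have "r mod 5 \<in> {0,1,2,3,4}" by auto
  ultimately have "r mod 5 = 0" by auto
  then obtain s where s: "r = 5 * s" by auto
  have "m^2 = 5 * s^2" using less.prems s by (simp add: power_mult_distrib)
  show "m = 0"
  proof (rule ccontr)
    assume "m \<noteq> 0"
    have "s^2 < m^2" using \<open>m^2 = 5 * s^2\<close> \<open>m \<noteq> 0\<close> by (smt (verit) power2_less_0 zero_less_power2)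
    hence "\<bar>s\<bar> < \<bar>m\<bar>" using abs_le_square_iff not_less by blast
    hence "nat \<bar>s\<bar> < nat \<bar>m\<bar>" by simp
    from less.hyps[OF this] \<open>m^2 = 5 * s^2\<close> have "s = 0" by blast
    with \<open>m^2 = 5 * s^2\<close> \<open>m \<noteq> 0\<close> show False by simp
  qed
qed

lemma irr: "real m * al = of_int k \<Longrightarrow> m = 0"
proof -
  assume h: "real m * al = of_int k"
  hence "sqrt 5 * real m = of_int (2*k) + real m" unfolding al_def by (simp add: algebra_simps)
  hence "(sqrt 5 * real m)^2 = (of_int (2*k + int m))^2" by simp
  hence "5 * (real m)^2 = (of_int (2*k + int m))^2" by (simp add: power_mult_distrib)
  hence "of_int (5 * (int m)^2) = (of_int ((2*k + int m)^2) :: real)" by simp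
  hence "(2*k + int m)^2 = 5 * (int m)^2" by (simp only: of_int_eq_iff)
  from no_sq5[OF this] show "m = 0" by simp
qed

definition g :: "nat \<Rightarrow> nat" where "g m = nat \<lfloor>real m * al\<rfloor>"
definition fr :: "nat \<Rightarrow> real" where "fr m = real m * al - real (g m)"

lemma g_real: "real (g m) = of_int \<lfloor>real m * al\<rfloor>"
  unfolding g_def using al_bounds by simp

lemma fr_bounds: "0 \<le> fr m" "fr m < 1"
  unfolding fr_def g_real by (simp_all add: floor_less_cancel)

lemma fr_pos: "m > 0 \<Longrightarrow> 0 < fr m"
proof -
  assume "m > 0"
  have "fr m \<noteq> 0"
  proof
    assume "fr m = 0"
    hence "real m * al = of_int \<lfloor>real m * al\<rfloor>" unfolding fr_def g_real by simp
    from irr[OF this] \<open>m>0\<close> show False by simp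
  qed
  with fr_bounds(1)[of m] show ?thesis by linarith
qed

lemma g_eqI: "real k \<le> real m * al \<Longrightarrow> real m * al < real k + 1 \<Longrightarrow> g m = k"
  unfolding g_def by (metis floor_unique nat_int of_int_of_nat_eq)

lemma gal: "real (g m) * al = real m - real m * al - fr m * al"
proof -
  have "real (g m) = real m * al - fr m" unfolding fr_def by simp
  hence "real (g m) * al = (real m * al - fr m) * al" by simp
  also have "\<dots> = real m * (al*al) - fr m * al" by (simp add: algebra_simps)
  finally show ?thesis using al_sq by (simp add: algebra_simps)
qed

definition jump :: "nat \<Rightarrow> bool" where "jump m \<longleftrightarrow> g (Suc m) = Suc (g m)"

lemma jump_iff: "jump m \<longleftrightarrow> fr m + al \<ge> 1"
proof -
  have e: "real (Suc m) * al = real (g m) + (fr m + al)" unfolding fr_def by (simp add: algebra_simps)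
  show ?thesis
  proof
    assume "jump m"
    hence "g (Suc m) = Suc (g m)" unfolding jump_def .
    hence "real (Suc (g m)) \<le> real (Suc m) * al" using g_real[of "Suc m"] by (metis of_int_floor_le)
    with e show "fr m + al \<ge> 1" by simp
  next
    assume "fr m + al \<ge> 1"
    hence "g (Suc m) = Suc (g m)" using e fr_bounds[of m] al_bounds by (intro g_eqI) auto
    thus "jump m" unfolding jump_def .
  qed
qed

lemma nojump: "\<not> jump m \<Longrightarrow> g (Suc m) = g m"
proof -
  assume "\<not> jump m"
  hence "fr m + al < 1" using jump_iff by simp
  moreover have e: "real (Suc m) * al = real (g m) + (fr m + al)" unfolding fr_def by (simp add: algebra_simps)
  ultimately show ?thesis using fr_bounds[of m] al_bounds by (intro g_eqI) auto
qed

lemma jump_strict: "jump m \<Longrightarrow> fr m > 1 - al"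
proof -
  assume "jump m"
  hence "fr m + al \<ge> 1" using jump_iff by simp
  moreover have "fr (Suc m) > 0" using fr_pos by simp
  moreover have "fr (Suc m) = fr m + al - 1"
    using \<open>jump m\<close> unfolding jump_def fr_def by (simp add: algebra_simps)
  ultimately show ?thesis by linarith
qed

lemma lemA: assumes "jump m" shows "g (g m + m + 1) = m" "g (g m + m + 2) = m"
proof -
  have f: "fr m > 1 - al" "fr m < 1" using jump_strict[OF assms] fr_bounds by auto
  have p1': "fr m * al > (1 - al) * al" using f al_bounds by (intro mult_strict_right_mono) auto
  have p1: "fr m * al > 2 * al - 1" using p1' al_sq by (simp add: algebra_simps)
  have p2: "fr m * al < al" using f al_bounds by simp
  have e1: "real (g m + m + 1) * al = real m + al - fr m * al" using gal[of m] by (simp add: algebra_simps)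
  have e2: "real (g m + m + 2) * al = real m + 2*al - fr m * al" using gal[of m] by (simp add: algebra_simps)
  show "g (g m + m + 1) = m" apply (rule g_eqI) unfolding e1 using p1 p2 al_bounds by linarith+
  show "g (g m + m + 2) = m" apply (rule g_eqI) unfolding e2 using p1 p2 al_bounds by linarith+
qed

lemma lemB: assumes "\<not> jump m" "m > 0" shows "g (g m) = m - g m - 1" "g (g m + 1) = m - g m"
proof -
  have f: "fr m < 1 - al" "fr m > 0" using assms jump_iff fr_pos by auto
  have p1: "fr m * al < (1 - al) * al" using f al_bounds by (intro mult_strict_right_mono) auto
  have p2: "fr m * al > 0" using f al_bounds by simp
  have gm: "real (g m) = real m * al - fr m" unfolding fr_def by simp
  have "real (g m) < real m" using gm f al_bounds \<open>m>0\<close>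
    by (smt (verit, best) mult_less_cancel_left2 of_nat_0_less_iff)
  hence lt: "g m + 1 \<le> m" by linarith
  have e1: "real (g m) * al = real m - real (g m) - fr m - fr m * al" using gal[of m] gm by linarith
  have e2: "real (g m + 1) * al = real m - real (g m) - fr m - fr m * al + al" using e1 by (simp add: algebra_simps)
  have p1': "fr m * al < al - (1 - al)" using p1 al_sq by (simp add: algebra_simps)
  have r1: "real (m - g m - 1) = real m - real (g m) - 1" using lt by (simp add: of_nat_diff)
  have r2: "real (m - g m) = real m - real (g m)" using lt by (simp add: of_nat_diff)
  show "g (g m) = m - g m - 1" apply (rule g_eqI) unfolding e1 r1 using p1' p2 f al_bounds by linarith+
  show "g (g m + 1) = m - g m" apply (rule g_eqI) unfolding e2 r2 using p1' p2 f al_bounds by linarith+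
qed

lemma g_lt: "m > 0 \<Longrightarrow> g m < m"
proof -
  assume "m > 0"
  have gm: "real (g m) = real m * al - fr m" unfolding fr_def by simp
  have "real m * al < real m" using al_bounds \<open>m>0\<close> by simp
  thus ?thesis using gm fr_bounds[of m] by linarith
qed

lemma lemC: assumes "jump n" shows "g (g n + 1) = n - g n - 1" "n \<ge> g n + 1"
proof -
  have f: "fr n > 1 - al" "fr n < 1" using jump_strict[OF assms] fr_bounds by auto
  have "n > 0" using f al_bounds by (cases n) (auto simp: fr_def g_def)
  hence lt: "g n + 1 \<le> n" using g_lt by (simp add: Suc_le_eq)
  then show "n \<ge> g n + 1" .
  have p1: "fr n * al > (1 - al) * al" using f al_bounds by (intro mult_strict_right_mono) auto
  have p2: "fr n * al < al" using f al_bounds by simp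
  have gm: "real (g n) = real n * al - fr n" unfolding fr_def by simp
  have e2: "real (g n + 1) * al = real n - real (g n) - fr n - fr n * al + al" 
  proof -
    have "real (g n + 1) * al = real (g n) * al + al" by (simp add: algebra_simps)
    thus ?thesis using gal[of n] gm by linarith
  qed
  have p1': "fr n * al > al - (1 - al)" using p1 al_sq by (simp add: algebra_simps)
  have r1: "real (n - g n - 1) = real n - real (g n) - 1" using lt by (simp add: of_nat_diff)
  show "g (g n + 1) = n - g n - 1" apply (rule g_eqI) unfolding e2 r1 using p1' p2 f al_bounds by linarith+
qed



lemma g0: "g 0 = 0" unfolding g_def by simp
lemma g1: "g 1 = 0" using al_bounds by (intro g_eqI) auto
lemma g2: "g 2 = 1" using al_bounds by (intro g_eqI) auto
lemma not_jump0: "\<not> jump 0" unfolding jump_def using g0 g1 by simp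

lemma g_step: "g (Suc m) = g m \<or> g (Suc m) = Suc (g m)"
  using nojump[of m] jump_def by blast

lemma g_mono: "m \<le> n \<Longrightarrow> g m \<le> g n"
proof (induction n)
  case 0 thus ?case by simp
next
  case (Suc n) thus ?case using g_step[of n] by (cases "m = Suc n") auto
qed

definition Ff :: "nat \<Rightarrow> nat" where
  "Ff n = (case n of 0 \<Rightarrow> 0 | Suc m \<Rightarrow> g m + 1 + (if jump m then Suc m else 0))"

lemma Ff0[simp]: "Ff 0 = 0" unfolding Ff_def by simp
lemma FfS: "Ff (Suc m) = g m + 1 + (if jump m then Suc m else 0)" unfolding Ff_def by simp

lemma Ff_invol: "Ff (Ff v) = v"
proof (cases v)
  case 0 thus ?thesis by simp
next
  case (Suc m)
  show ?thesis
  proof (cases "jump m")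
    case True
    have "Ff v = Suc (g m + m + 1)" using True Suc FfS by simp
    moreover have "\<not> jump (g m + m + 1)" using lemA[OF True] unfolding jump_def by simp
    ultimately show ?thesis using lemA[OF True] FfS Suc by simp
  next
    case False
    show ?thesis
    proof (cases "m = 0")
      case True thus ?thesis using Suc FfS g0 not_jump0 by simp
    next
      case m0: False
      have lt: "g m + 1 \<le> m" using g_lt[of m] m0 by simp
      have B: "g (g m) = m - g m - 1" "g (g m + 1) = m - g m" using lemB[OF False] m0 by auto
      have j: "jump (g m)" unfolding jump_def using B lt by simp
      have "Ff v = Suc (g m)" using False Suc FfS by simp
      then show ?thesis using j B lt FfS Suc by simp
    qed
  qed
qed

lemma Ff_inj: "Ff a = Ff b \<Longrightarrow> a = b"
  by (metis Ff_invol)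

lemma Ff_step: "n * (g n + 1) + Ff (Suc n) = Suc n * (g (Suc n) + 1)"
proof (cases "jump n")
  case True
  hence "g (Suc n) = Suc (g n)" unfolding jump_def .
  thus ?thesis using True FfS by (simp add: algebra_simps)
next
  case False
  thus ?thesis using nojump[OF False] FfS by (simp add: algebra_simps)
qed

lemma Ff_sum: "(\<Sum>i=1..n. Ff i) = n * (g n + 1)"
proof (induction n)
  case 0 thus ?case by simp
next
  case (Suc n)
  have "(\<Sum>i=1..Suc n. Ff i) = (\<Sum>i=1..n. Ff i) + Ff (Suc n)" by simp
  thus ?case using Suc Ff_step by simp
qed

lemma cls:
  fixes n c y :: nat
  assumes "Suc n dvd (n*c + y)" "c \<le> n"
  shows "y = c \<or> c + Suc n \<le> y"
proof -
  obtain t where t: "n*c + y = Suc n * t" using assms(1) by (auto elim: dvdE)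
  show ?thesis
  proof (cases "t \<le> c")
    case True
    show ?thesis
    proof (cases "t = c")
      case True thus ?thesis using t by simp
    next
      case False
      hence "t < c" using \<open>t \<le> c\<close> by simp
      hence "Suc n * t + n * (c - t) = n * c + t" by (simp add: algebra_simps diff_mult_distrib2)
      hence "y + n * (c - t) = t" using t by simp
      moreover have "n * (c - t) \<ge> n * 1" using \<open>t < c\<close> by (intro mult_le_mono2) simp
      ultimately show ?thesis using \<open>t < c\<close> assms(2) by simp
    qed
  next
    case False
    then obtain s where s: "t = c + Suc s" by (metis add_Suc_right less_imp_Suc_add not_le)
    have "y = c + Suc n * Suc s" using t s by (simp add: algebra_simps)
    thus ?thesis by simp
  qed
qed

lemma Ff_used: assumes "jump n" shows "Ff (g n + 1) \<le> n" "Ff (g n + 1) \<ge> 1"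
proof -
  have C: "g (g n + 1) = n - g n - 1" "n \<ge> g n + 1" using lemC[OF assms] by auto
  show "Ff (g n + 1) \<le> n"
  proof (cases "jump (g n)")
    case True
    hence "g (g n) + 1 = n - g n - 1" using C unfolding jump_def by simp
    thus ?thesis using True FfS[of "g n"] C by simp
  next
    case False
    thus ?thesis using nojump[OF False] FfS[of "g n"] C by simp
  qed
  show "Ff (g n + 1) \<ge> 1" using FfS[of "g n"] by simp
qed

lemma fvals_eq: "fvals n = map Ff [0..<Suc n]"
proof (induction n)
  case 0 thus ?case by simp
next
  case (Suc n)
  have tl: "sum_list (tl (map Ff [0..<Suc n])) = n * (g n + 1)"
  proof -
    have h1: "tl (map Ff [0..<Suc n]) = map Ff [1..<Suc n]"
      by (simp add: upt_rec)
    have "sum_list (tl (map Ff [0..<Suc n])) = sum_list (map Ff [1..<Suc n])" by (simp only: h1)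
    also have "\<dots> = sum Ff {1..<Suc n}" by (simp only: sum_set_upt_conv_sum_list_nat[symmetric] set_upt)
    also have "\<dots> = sum Ff {1..n}" by (simp only: atLeastLessThanSuc_atLeastAtMost)
    finally show ?thesis using Ff_sum[of n] by simp
  qed
  have st: "set (map Ff [0..<Suc n]) = Ff ` {0..n}" by (simp only: set_map set_upt atLeastLessThanSuc_atLeastAtMost)
  have "(LEAST v. v \<notin> set (fvals n) \<and> Suc n dvd (sum_list (tl (fvals n)) + v)) = Ff (Suc n)"
  proof (rule Least_equality)
    show "Ff (Suc n) \<notin> set (fvals n) \<and> Suc n dvd (sum_list (tl (fvals n)) + Ff (Suc n))"
      unfolding Suc.IH tl st
    proof
      show "Ff (Suc n) \<notin> Ff ` {0..n}" using Ff_inj by fastforce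
      show "Suc n dvd n * (g n + 1) + Ff (Suc n)" unfolding Ff_step by (rule dvd_triv_left)
    qed
  next
    fix y assume "y \<notin> set (fvals n) \<and> Suc n dvd (sum_list (tl (fvals n)) + y)"
    hence ny: "y \<notin> Ff ` {0..n}" and dv: "Suc n dvd (n * (g n + 1) + y)" unfolding Suc.IH tl st by auto
    show "Ff (Suc n) \<le> y"
    proof (cases "n = 0")
      case True
      hence "y \<noteq> 0" using ny by auto
      thus ?thesis using True FfS not_jump0 g0 by simp
    next
      case n0: False
      have le: "g n + 1 \<le> n" using g_lt[of n] n0 by simp
      from cls[OF dv le] have "y = g n + 1 \<or> g n + 1 + Suc n \<le> y" .
      thus ?thesis
      proof
        assume yc: "y = g n + 1"
        show ?thesis
        proof (cases "jump n")
          case True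
          have "Ff (Ff (g n + 1)) = y" using yc Ff_invol by simp
          moreover have "Ff (g n + 1) \<in> {0..n}" using Ff_used[OF True] by simp
          ultimately show ?thesis using ny by blast
        next
          case False thus ?thesis using yc FfS by simp
        qed
      next
        assume "g n + 1 + Suc n \<le> y" thus ?thesis using FfS by simp
      qed
    qed
  qed
  thus ?case using Suc.IH by simp
qed

lemma fseq_eq: "fseq n = Ff n"
  unfolding fseq_def fvals_eq by simp



lemma alb: "3/5 < al" "al < 5/8" using al_bounds by simp_all

lemma fib_al: "real (fib (Suc j)) * al - real (fib j) = - ((- al) ^ Suc j)"
proof (induction j rule: nat_less_induct)
  case (1 j)
  show ?case
  proof (cases j)
    case 0 thus ?thesis by simp
  next
    case (Suc i)
    have IH: "real (fib (Suc i)) * al - real (fib i) = - ((- al) ^ Suc i)" using 1 Suc by simp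
    have "real (fib (Suc j)) * al - real (fib j) = (real (fib (Suc i)) + real (fib i)) * al - real (fib (Suc i))"
      using Suc by simp
    also have "\<dots> = - al * (real (fib (Suc i)) * al - real (fib i))"
    proof -
      have "- al * (real (fib (Suc i)) * al - real (fib i)) = - real (fib (Suc i)) * (al * al) + real (fib i) * al"
        by (simp add: algebra_simps)
      also have "\<dots> = (real (fib (Suc i)) + real (fib i)) * al - real (fib (Suc i))"
        unfolding al_sq by (simp add: algebra_simps)
      finally show ?thesis by simp
    qed
    also have "\<dots> = - ((- al) ^ Suc j)" using IH Suc by simp
    finally show ?thesis .
  qed
qed

lemma fib_odd_al: "real (fib (2*k+1)) * al = real (fib (2*k)) + al ^ (2*k+1)"
proof -
  have "real (fib (Suc (2*k))) * al - real (fib (2*k)) = - ((- al) ^ Suc (2*k))" by (rule fib_al)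
  moreover have "(- al) ^ Suc (2*k) = - (al ^ Suc (2*k))" by (simp add: power_minus_odd)
  ultimately show ?thesis by simp
qed

lemma al3: "al ^ 3 = 2 * al - 1"
proof -
  have "al ^ 3 = al * (al * al)" by (simp add: power3_eq_cube)
  also have "\<dots> = 2 * al - 1" unfolding al_sq using al_sq by (simp add: algebra_simps)
  finally show ?thesis .
qed

lemma alpow: assumes "k \<ge> 1" shows "0 < al ^ (2*k+1)" "al ^ (2*k+1) + al < 1" "al ^ (2*k+1) < al"
proof -
  show "0 < al ^ (2*k+1)" using al_bounds by simp
  have h: "al ^ (2*k+1) \<le> al ^ 3" using assms al_bounds by (intro power_decreasing) auto
  show "al ^ (2*k+1) + al < 1" using h al3 alb by linarith
  show "al ^ (2*k+1) < al" using h al3 alb by linarith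
qed

lemma fib_pos: "n > 0 \<Longrightarrow> fib n \<ge> 1" using fib_neq_0_nat by (simp add: Suc_le_eq)

lemma fib_strict_step: "m \<ge> 2 \<Longrightarrow> fib m < fib (Suc m)"
proof -
  assume "m \<ge> 2"
  then obtain i where "m = Suc i" "i \<ge> 1" by (cases m) auto
  thus ?thesis using fib_pos[of i] by simp
qed

lemma fib_strict: "2 \<le> a \<Longrightarrow> a < b \<Longrightarrow> fib a < fib b"
proof (induction b)
  case 0 thus ?case by simp
next
  case (Suc b)
  show ?case
  proof (cases "a = b")
    case True thus ?thesis using fib_strict_step Suc by simp
  next
    case False
    hence "fib a < fib b" using Suc by simp
    also have "fib b \<le> fib (Suc b)" by (rule fib_Suc_mono)
    finally show ?thesis .
  qed
qed

lemma fib_inj2: "2 \<le> a \<Longrightarrow> 2 \<le> b \<Longrightarrow> fib a = fib b \<Longrightarrow> a = b"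
  by (metis fib_strict less_irrefl nat_neq_iff)

definition isE :: "nat \<Rightarrow> bool" where "isE m \<longleftrightarrow> (\<exists>k\<ge>1. m = fib (2*k+1))"

lemma fib3: "fib 3 = 2" by (simp add: numeral_eq_Suc)
lemma fib4: "fib 4 = 3" by (simp add: numeral_eq_Suc)
lemma fib5: "fib 5 = 5" by (simp add: numeral_eq_Suc)

lemma isE2: "isE 2" unfolding isE_def by (rule exI[of _ 1]) (simp add: fib3)

lemma isE_ge2: "isE q \<Longrightarrow> q \<ge> 2"
proof -
  assume "isE q"
  then obtain k where k: "k \<ge> 1" "q = fib (2*k+1)" unfolding isE_def by blast
  have "fib 3 \<le> fib (2*k+1)" using k(1) by (intro fib_mono) simp
  thus ?thesis using k fib3 by simp
qed

lemma fib_ge: "fib (2*k+2) \<ge> 3" if "k \<ge> 1" for k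
proof -
  have "fib 4 \<le> fib (2*k+2)" using that by (intro fib_mono) simp
  thus ?thesis using fib4 by simp
qed
lemma fib_rec3: "fib (m+2) = fib (m+1) + fib m"
  using fib2[of m] by (simp only: add_2_eq_Suc' Suc_eq_plus1)
lemma isE_not_Suc: "isE q \<Longrightarrow> \<not> isE (Suc q)"
proof
  assume "isE q" "isE (Suc q)"
  then obtain k j where k: "k \<ge> 1" "q = fib (2*k+1)" and j: "j \<ge> 1" "Suc q = fib (2*j+1)"
    unfolding isE_def by blast
  show False
  proof (cases "j \<le> k")
    case True
    hence "fib (2*j+1) \<le> fib (2*k+1)" by (intro fib_mono) simp
    thus False using k j by simp
  next
    case False
    hence "fib (2*k+1+2) \<le> fib (2*j+1)" by (intro fib_mono) simp
    moreover have "fib (2*k+1+2) = fib (2*k+2) + fib (2*k+1)"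
      using fib_rec3[of "2*k+1"] by simp
    ultimately show False using k j fib_ge[OF k(1)] by linarith
  qed
qed

lemma isE_unique: "k \<ge> 1 \<Longrightarrow> j \<ge> 1 \<Longrightarrow> fib (2*k+1) = fib (2*j+1) \<Longrightarrow> k = j"
  using fib_inj2[of "2*k+1" "2*j+1"] by simp

lemma gE: assumes "k \<ge> 1" "q = fib (2*k+1)"
  shows "g q = fib (2*k)" "g (q - 1) = fib (2*k) - 1" "g (Suc q) = fib (2*k)" "fib (2*k) \<ge> 1" "q \<ge> 2"
proof -
  have e: "real q * al = real (fib (2*k)) + al ^ (2*k+1)" using fib_odd_al assms by simp
  note p = alpow[OF assms(1)]
  show f1: "fib (2*k) \<ge> 1" using fib_pos assms by simp
  show q2: "q \<ge> 2" using isE_ge2 assms unfolding isE_def by blast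
  show "g q = fib (2*k)" apply (rule g_eqI) unfolding e using p alb by linarith+
  have r: "real (fib (2*k) - 1) = real (fib (2*k)) - 1" using f1 by (simp add: of_nat_diff)
  have h1: "real (q - 1) * al = real (fib (2*k)) + al ^ (2*k+1) - al" using q2 e by (simp add: of_nat_diff algebra_simps)
  show "g (q - 1) = fib (2*k) - 1" apply (rule g_eqI) unfolding h1 r using p alb by linarith+
  have h2: "real (Suc q) * al = real (fib (2*k)) + al ^ (2*k+1) + al" using e by (simp add: algebra_simps)
  show "g (Suc q) = fib (2*k)" apply (rule g_eqI) unfolding h2 using p alb by linarith+
qed

lemma jumpE: assumes "isE q" shows "jump (q - 1)" "\<not> jump q" "g q \<ge> 1"
proof -
  obtain k where k: "k \<ge> 1" "q = fib (2*k+1)" using assms isE_def by blast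
  note G = gE[OF k]
  show "jump (q - 1)" unfolding jump_def using G by simp
  show "\<not> jump q" unfolding jump_def using G by simp
  show "g q \<ge> 1" using G by simp
qed

definition e :: "nat \<Rightarrow> nat" where "e m = (if isE m then 1 else 0)"
definition dz :: "nat \<Rightarrow> nat" where "dz n = g (Suc n) - e (Suc n)"
definition Zf :: "nat \<Rightarrow> nat" where
  "Zf n = (if n < 2 then n else dz (n - 1) + (if dz n = Suc (dz (n - 1)) then Suc n else 0))"

lemma dz_prev: "n \<ge> 1 \<Longrightarrow> dz (n - 1) = g n - e n"
  unfolding dz_def by simp

lemma Zf_isE: assumes "isE N" shows "Zf N = g N - 1 + Suc N" "dz N = Suc (dz (N - 1))" "dz (N - 1) = g N - 1"
proof -
  have N2: "N \<ge> 2" using isE_ge2 assms by simp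
  have a: "dz (N - 1) = g N - 1" using dz_prev[of N] N2 assms e_def by simp
  have b: "dz N = g N" unfolding dz_def e_def using isE_not_Suc[OF assms] nojump[OF jumpE(2)[OF assms]] by simp
  have c: "g N \<ge> 1" using jumpE(3)[OF assms] .
  show "dz N = Suc (dz (N - 1))" using a b c by simp
  show "Zf N = g N - 1 + Suc N" using a b c N2 unfolding Zf_def by simp
  show "dz (N - 1) = g N - 1" by (rule a)
qed

lemma Zf_isES: assumes "isE (Suc N)" "N \<ge> 2" shows "Zf N = g N" "dz N = dz (N - 1)" "dz (N - 1) = g N"
proof -
  have nE: "\<not> isE N" using isE_not_Suc assms(1) by blast
  have a: "dz (N - 1) = g N" using dz_prev[of N] assms nE e_def by simp
  have j: "jump N" using jumpE(1)[OF assms(1)] by simp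
  have b: "dz N = g N" unfolding dz_def e_def using assms j unfolding jump_def by simp
  show "Zf N = g N" using a b assms unfolding Zf_def by simp
  show "dz N = dz (N - 1)" using a b by simp
  show "dz (N - 1) = g N" by (rule a)
qed

lemma Zf_reg: assumes "\<not> isE N" "\<not> isE (Suc N)" "N \<ge> 2"
  shows "Zf N = g N + (if jump N then Suc N else 0)" "dz (N - 1) = g N" "dz N = g (Suc N)"
proof -
  have a: "dz (N - 1) = g N" using dz_prev[of N] assms e_def by simp
  have b: "dz N = g (Suc N)" unfolding dz_def e_def using assms by simp
  show "Zf N = g N + (if jump N then Suc N else 0)" using a b assms unfolding Zf_def jump_def by simp
  show "dz (N - 1) = g N" by (rule a)
  show "dz N = g (Suc N)" by (rule b)
qed

lemma dz_step: assumes "N \<ge> 2" shows "dz N = dz (N - 1) \<or> dz N = Suc (dz (N - 1))"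
proof (cases "isE N")
  case True thus ?thesis using Zf_isE by simp
next
  case nE: False
  show ?thesis
  proof (cases "isE (Suc N)")
    case True thus ?thesis using Zf_isES assms by simp
  next
    case False thus ?thesis using Zf_reg[OF nE False assms] g_step[of N] by simp
  qed
qed

lemma Zf_step: assumes "N \<ge> 2" shows "N * dz (N - 1) + Zf N = Suc N * dz N"
proof -
  have Z: "Zf N = dz (N - 1) + (if dz N = Suc (dz (N - 1)) then Suc N else 0)"
    using assms unfolding Zf_def by simp
  from dz_step[OF assms] show ?thesis
  proof
    assume "dz N = dz (N - 1)" thus ?thesis using Z by simp
  next
    assume "dz N = Suc (dz (N - 1))" thus ?thesis using Z by (simp add: algebra_simps)
  qed
qed

lemma dz1: "dz 1 = 0" unfolding dz_def e_def using g2 isE2 by (simp add: numeral_2_eq_2)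

lemma Zf_sum: "n \<ge> 1 \<Longrightarrow> (\<Sum>i=2..n. Zf i) = Suc n * dz n"
proof (induction n)
  case 0 thus ?case by simp
next
  case (Suc n)
  show ?case
  proof (cases "n = 0")
    case True thus ?thesis using dz1 by simp
  next
    case False
    have "(\<Sum>i=2..Suc n. Zf i) = (\<Sum>i=2..n. Zf i) + Zf (Suc n)" using False by simp
    also have "\<dots> = Suc n * dz n + Zf (Suc n)" using Suc False by simp
    also have "\<dots> = Suc (Suc n) * dz (Suc n)" using Zf_step[of "Suc n"] False by simp
    finally show ?thesis .
  qed
qed



declare fib.simps(3)[simp del]

lemma Zq: assumes "k \<ge> 1" "q = fib (2*k+1)" shows "Zf q = fib (2*k+2)"
proof -
  have iq: "isE q" using assms isE_def by blast
  note G = gE[OF assms]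
  have "Zf q = fib (2*k) - 1 + Suc (fib (2*k+1))" using Zf_isE(1)[OF iq] G assms by simp
  also have "\<dots> = fib (2*k+1) + fib (2*k)" using G by simp
  also have "\<dots> = fib (2*k+2)" using fib_rec3[of "2*k"] by simp
  finally show ?thesis .
qed


lemma Zq1: assumes "k \<ge> 2" "q = fib (2*k+1)" shows "Zf (q - 1) = fib (2*k) - 1"
proof -
  have k1: "k \<ge> 1" using assms by simp
  have iq: "isE q" using assms isE_def k1 by blast
  have "fib 5 \<le> fib (2*k+1)" using assms by (intro fib_mono) simp
  hence q5: "q \<ge> 5" using fib5 assms by simp
  have "Zf (q - 1) = g (q - 1)" using Zf_isES(1)[of "q-1"] iq q5 by simp
  thus ?thesis using gE[OF k1 assms(2)] by simp
qed

lemma Zf0: "Zf 0 = 0" unfolding Zf_def by simp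
lemma Zf1: "Zf 1 = 1" unfolding Zf_def by simp

lemma FfSq: assumes "k \<ge> 1" "q = fib (2*k+1)" shows "Ff (Suc q) = fib (2*k) + 1"
proof -
  have iq: "isE q" using assms isE_def by blast
  show ?thesis using FfS[of q] jumpE(2)[OF iq] gE[OF assms] by simp
qed

lemma Ffq: assumes "k \<ge> 1" "q = fib (2*k+1)" shows "Ff q = fib (2*k+2)"
proof -
  have iq: "isE q" using assms isE_def by blast
  note G = gE[OF assms]
  have "Ff q = Ff (Suc (q - 1))" using G by simp
  also have "\<dots> = g (q - 1) + 1 + Suc (q - 1)" using FfS[of "q-1"] jumpE(1)[OF iq] by simp
  also have "\<dots> = fib (2*k+1) + fib (2*k)" using G assms by simp
  also have "\<dots> = fib (2*k+2)" using fib_rec3[of "2*k"] by simp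
  finally show ?thesis .
qed

lemma Zf_nonexc: assumes "\<not> isE N" "\<not> isE (Suc N)" shows "Zf N = Ff (Suc N) - 1"
proof (cases "N \<ge> 2")
  case True
  show ?thesis using Zf_reg(1)[OF assms True] FfS[of N] by simp
next
  case False
  hence "N = 0 \<or> N = 1" by auto
  thus ?thesis
  proof
    assume "N = 0" thus ?thesis using Zf0 FfS[of 0] not_jump0 g0 by simp
  next
    assume "N = 1" thus ?thesis using assms(2) isE2 by (simp add: numeral_2_eq_2)
  qed
qed

definition exc :: "nat \<Rightarrow> bool" where "exc N \<longleftrightarrow> isE N \<or> isE (Suc N)"

lemma exc_vals: assumes "exc N"
  shows "(\<exists>k\<ge>1. N = fib (2*k+1) \<and> Zf N = fib (2*k+2)) \<or> (N = 1 \<and> Zf N = 1) \<or>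
         (\<exists>k\<ge>2. N = fib (2*k+1) - 1 \<and> Zf N = fib (2*k) - 1)"
proof (cases "isE N")
  case True
  then obtain k where "k \<ge> 1" "N = fib (2*k+1)" using isE_def by blast
  thus ?thesis using Zq by blast
next
  case False
  hence "isE (Suc N)" using assms exc_def by blast
  then obtain k where k: "k \<ge> 1" "Suc N = fib (2*k+1)" using isE_def by blast
  show ?thesis
  proof (cases "k = 1")
    case True
    hence "N = 1" using k fib3 by simp
    thus ?thesis using Zf1 by simp
  next
    case False
    hence "k \<ge> 2" using k by simp
    moreover have "N = fib (2*k+1) - 1" using k by simp
    ultimately show ?thesis using Zq1[of k "Suc N"] k by auto
  qed
qed

lemma exc_repr: assumes "exc N" shows "\<exists>y. exc y \<and> Zf N = Ff (Suc y) - 1"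
proof (cases "isE N")
  case True
  then obtain k where k: "k \<ge> 1" "N = fib (2*k+1)" using isE_def by blast
  define y where "y = fib (2*(k+1)+1)"
  have "isE y" unfolding y_def isE_def by (rule exI[of _ "k+1"]) simp
  moreover have "Ff (Suc y) = fib (2*(k+1)) + 1" using FfSq[of "k+1" y] y_def by simp
  moreover have "Zf N = fib (2*k+2)" using Zq k by simp
  ultimately show ?thesis unfolding exc_def by (intro exI[of _ y]) simp
next
  case False
  hence "isE (Suc N)" using assms exc_def by blast
  then obtain k where k: "k \<ge> 1" "Suc N = fib (2*k+1)" using isE_def by blast
  show ?thesis
  proof (cases "k = 1")
    case True
    hence N1: "N = 1" using k fib3 by simp
    have "Ff (Suc 2) = fib 2 + 1" using FfSq[of 1 2] fib3 by simp
    thus ?thesis using N1 Zf1 isE2 unfolding exc_def by (intro exI[of _ 2]) simp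
  next
    case False
    hence k2: "k \<ge> 2" using k by simp
    define y where "y = fib (2*(k-1)+1) - 1"
    have gy: "fib (2*(k-1)+1) \<ge> 2" using fib_mono[of 3 "2*(k-1)+1"] fib3 k2 by simp
    have sy: "Suc y = fib (2*(k-1)+1)" using gy y_def by simp
    have "isE (Suc y)" unfolding sy isE_def using k2 by (intro exI[of _ "k-1"]) simp
    moreover have "Ff (Suc y) = fib (2*k)"
    proof -
      have "Ff (Suc y) = fib (2*(k-1)+2)" using Ffq[of "k-1" "Suc y"] sy k2 by simp
      moreover have "2*(k-1)+2 = 2*k" using k2 by simp
      ultimately show ?thesis by simp
    qed
    moreover have "Zf N = fib (2*k) - 1"
    proof -
      have "Zf (Suc N - 1) = fib (2*k) - 1" using Zq1[of k "Suc N"] k k2 by blast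
      thus ?thesis by simp
    qed
    ultimately show ?thesis unfolding exc_def by (intro exI[of _ y]) simp
  qed
qed

lemma Ff_Suc_pos: "Ff (Suc y) \<ge> 1" using FfS[of y] by simp

lemma fib_neq: assumes "k \<ge> 1" "j \<ge> 2" shows "fib (2*k+2) \<noteq> fib (2*j) - 1"
proof (cases "j \<le> k + 1")
  case True
  hence "fib (2*j) \<le> fib (2*k+2)" by (intro fib_mono) simp
  moreover have "fib (2*k+2) \<ge> 3" using fib_ge assms by simp
  ultimately show ?thesis by simp
next
  case False
  hence "fib (2*k+2+2) \<le> fib (2*j)" by (intro fib_mono) simp
  moreover have "fib (2*k+2+2) = fib (2*k+2+1) + fib (2*k+2)" by (rule fib_rec3)
  moreover have "fib (2*k+2+1) \<ge> 2" using fib_mono[of 3 "2*k+2+1"] fib3 by simp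
  ultimately show ?thesis by simp
qed

lemma fib_even_ge3: "k \<ge> 2 \<Longrightarrow> fib (2*k) \<ge> 3"
  using fib_mono[of 4 "2*k"] fib4 by simp

lemma Zf_inj: assumes "Zf a = Zf b" shows "a = b"
proof (cases "exc a")
  case ea: True
  show ?thesis
  proof (cases "exc b")
    case eb: True
    from exc_vals[OF ea] exc_vals[OF eb] assms show ?thesis
    proof (elim disjE exE conjE)
      fix k j assume "k \<ge> 1" "a = fib (2*k+1)" "Zf a = fib (2*k+2)" "j \<ge> 1" "b = fib (2*j+1)" "Zf b = fib (2*j+2)"
      thus "a = b" using assms fib_inj2[of "2*k+2" "2*j+2"] by simp
    next
      fix k assume "k \<ge> 1" "Zf a = fib (2*k+2)" "Zf b = 1"
      thus "a = b" using assms fib_ge by fastforce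
    next
      fix k j assume "k \<ge> 1" "Zf a = fib (2*k+2)" "j \<ge> 2" "Zf b = fib (2*j) - 1"
      thus "a = b" using assms fib_neq by metis
    next
      fix k assume "k \<ge> 1" "Zf a = 1" "Zf b = fib (2*k+2)"
      thus "a = b" using assms fib_ge by fastforce
    next
      assume "a = 1" "b = 1" thus "a = b" by simp
    next
      fix k assume "Zf a = 1" "k \<ge> 2" "Zf b = fib (2*k) - 1"
      thus "a = b" using assms fib_even_ge3 by fastforce
    next
      fix k j assume "k \<ge> 2" "Zf a = fib (2*k) - 1" "j \<ge> 1" "Zf b = fib (2*j+2)"
      thus "a = b" using assms fib_neq by metis
    next
      fix k assume "k \<ge> 2" "Zf a = fib (2*k) - 1" "Zf b = 1"
      thus "a = b" using assms fib_even_ge3 by fastforce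
    next
      fix k j assume "k \<ge> 2" "a = fib (2*k+1) - 1" "Zf a = fib (2*k) - 1" "j \<ge> 2" "b = fib (2*j+1) - 1" "Zf b = fib (2*j) - 1"
      moreover have "fib (2*k) \<ge> 3" "fib (2*j) \<ge> 3" using fib_even_ge3 \<open>k \<ge> 2\<close> \<open>j \<ge> 2\<close> by auto
      ultimately have "fib (2*k) = fib (2*j)" using assms by simp
      hence "2*k = 2*j" using fib_inj2[of "2*k" "2*j"] \<open>k \<ge> 2\<close> \<open>j \<ge> 2\<close> by simp
      thus "a = b" using \<open>a = _\<close> \<open>b = _\<close> by simp
    qed
  next
    case eb: False
    obtain y where y: "exc y" "Zf a = Ff (Suc y) - 1" using exc_repr[OF ea] by blast
    have "Zf b = Ff (Suc b) - 1" using eb Zf_nonexc exc_def by blast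
    hence "Ff (Suc y) = Ff (Suc b)" using y assms Ff_Suc_pos[of y] Ff_Suc_pos[of b] by simp
    hence "y = b" using Ff_inj by blast
    thus ?thesis using y eb by simp
  qed
next
  case ea: False
  show ?thesis
  proof (cases "exc b")
    case eb: True
    obtain y where y: "exc y" "Zf b = Ff (Suc y) - 1" using exc_repr[OF eb] by blast
    have "Zf a = Ff (Suc a) - 1" using ea Zf_nonexc exc_def by blast
    hence "Ff (Suc y) = Ff (Suc a)" using y assms Ff_Suc_pos[of y] Ff_Suc_pos[of a] by simp
    hence "y = a" using Ff_inj by blast
    thus ?thesis using y ea by simp
  next
    case eb: False
    have "Zf a = Ff (Suc a) - 1" "Zf b = Ff (Suc b) - 1" using ea eb Zf_nonexc exc_def by blast+
    hence "Ff (Suc a) = Ff (Suc b)" using assms Ff_Suc_pos[of a] Ff_Suc_pos[of b] by simp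
    thus ?thesis using Ff_inj by blast
  qed
qed



lemma jump_unique: assumes "jump a" "jump b" "g a = g b" shows "a = b"
proof (rule ccontr)
  assume "a \<noteq> b"
  hence "a < b \<or> b < a" by auto
  thus False
  proof
    assume "a < b"
    hence "g (Suc a) \<le> g b" by (intro g_mono) simp
    thus False using assms unfolding jump_def by simp
  next
    assume "b < a"
    hence "g (Suc b) \<le> g a" by (intro g_mono) simp
    thus False using assms unfolding jump_def by simp
  qed
qed

lemma witness: assumes "N \<ge> 2" "dz N = Suc (dz (N - 1))" shows "\<exists>i\<le>N-1. Zf i = dz (N - 1)"
proof (cases "isE N")
  case True
  then obtain k where k: "k \<ge> 1" "N = fib (2*k+1)" using isE_def by blast
  have d: "dz (N - 1) = fib (2*k) - 1" using Zf_isE(3)[OF True] gE[OF k] by simp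
  show ?thesis
  proof (cases "k = 1")
    case True
    hence "dz (N - 1) = 0" using d by simp
    thus ?thesis using Zf0 by (intro exI[of _ 0]) simp
  next
    case False
    hence "k \<ge> 2" using k by simp
    thus ?thesis using Zq1[OF _ k(2)] d by (intro exI[of _ "N - 1"]) simp
  qed
next
  case nE: False
  show ?thesis
  proof (cases "isE (Suc N)")
    case True
    thus ?thesis using Zf_isES(2)[OF True assms(1)] assms(2) by simp
  next
    case nES: False
    note R = Zf_reg[OF nE nES assms(1)]
    have jN: "jump N" using R assms(2) unfolding jump_def by simp
    note U = Ff_used[OF jN]
    define i where "i = Ff (g N + 1) - 1"
    have si: "Suc i = Ff (g N + 1)" using U i_def by simp
    have fi: "Ff (Suc i) = g N + 1" using si Ff_invol by metis
    have iN: "i \<le> N - 1" using U i_def by simp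
    show ?thesis
    proof (cases "exc i")
      case False
      hence "Zf i = Ff (Suc i) - 1" using Zf_nonexc exc_def by blast
      thus ?thesis using fi iN R by (intro exI[of _ i]) simp
    next
      case True
      show ?thesis
      proof (cases "isE i")
        case True
        then obtain k where k: "k \<ge> 1" "i = fib (2*k+1)" using isE_def by blast
        have gN: "g N = fib (2*k)" using FfSq[OF k] fi by simp
        show ?thesis
        proof (cases "k = 1")
          case True
          hence "g N = 1" using gN by simp
          thus ?thesis using Zf1 R assms(1) by (intro exI[of _ 1]) simp
        next
          case False
          hence k2: "k \<ge> 2" using k by simp
          define w where "w = fib (2*(k-1)+1)"
          have Zw: "Zf w = fib (2*k)"
          proof -
            have "Zf w = fib (2*(k-1)+2)" using Zq[of "k-1" w] k2 w_def by simp
            moreover have "2*(k-1)+2 = 2*k" using k2 by simp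
            ultimately show ?thesis by simp
          qed
          have "N \<ge> fib (2*k+1)"
          proof (rule ccontr)
            assume "\<not> N \<ge> fib (2*k+1)"
            hence "N \<le> fib (2*k+1) - 1" by simp
            hence "g N \<le> g (fib (2*k+1) - 1)" by (rule g_mono)
            thus False using gE[OF k(1) refl] gN by simp
          qed
          moreover have "fib (2*k+1) = fib (2*k) + w"
          proof -
            have "fib (2*(k-1)+1+2) = fib (2*(k-1)+1+1) + fib (2*(k-1)+1)" by (rule fib_rec3)
            moreover have "2*(k-1)+1+2 = 2*k+1" "2*(k-1)+1+1 = 2*k" using k2 by simp_all
            ultimately show ?thesis using w_def by simp
          qed
          moreover have "fib (2*k) \<ge> 1" using fib_pos k2 by simp
          ultimately have "w \<le> N - 1" by simp
          thus ?thesis using Zw gN R by (intro exI[of _ w]) simp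
        qed
      next
        case False
        hence iS: "isE (Suc i)" using True exc_def by blast
        then obtain k where k: "k \<ge> 1" "Suc i = fib (2*k+1)" using isE_def by blast
        have gN: "g N + 1 = fib (2*k+2)" using Ffq[OF k] fi k by simp
        define q where "q = fib (2*(k+1)+1)"
        have iq: "isE q" unfolding isE_def q_def by (intro exI[of _ "k+1"]) simp
        have "g (q - 1) = fib (2*(k+1)) - 1" using gE[of "k+1" q] q_def by simp
        hence "g (q - 1) = g N" using gN by simp
        hence "q - 1 = N" using jump_unique jumpE(1)[OF iq] jN by blast
        hence "Suc N = q" using isE_ge2[OF iq] by simp
        thus ?thesis using nES iq by simp
      qed
    qed
  qed
qed

lemma zvals_eq: "zvals n = map Zf [0..<Suc n]"
proof (induction n)
  case 0 thus ?case using Zf0 by simp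
next
  case (Suc n)
  have st: "set (map Zf [0..<Suc n]) = Zf ` {0..n}" by (simp only: set_map set_upt atLeastLessThanSuc_atLeastAtMost)
  show ?case
  proof (cases "n = 0")
    case True
    have "(LEAST v. v \<notin> set (zvals n) \<and> (Suc n + 1) dvd (if Suc n \<ge> 2 then sum_list (drop 2 (zvals n)) + v else 0)) = 1"
      using True by (intro Least_equality) auto
    thus ?thesis using Suc.IH True Zf1 by simp
  next
    case n0: False
    define N where "N = Suc n"
    have N2: "N \<ge> 2" using n0 N_def by simp
    have sm: "sum_list (drop 2 (map Zf [0..<Suc n])) = N * dz (N - 1)"
    proof -
      have "drop 2 (map Zf [0..<Suc n]) = map Zf [2..<Suc n]" by (simp add: drop_map numeral_2_eq_2)
      hence "sum_list (drop 2 (map Zf [0..<Suc n])) = sum_list (map Zf [2..<Suc n])" by simp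
      also have "\<dots> = sum Zf {2..<Suc n}" by (simp only: sum_set_upt_conv_sum_list_nat[symmetric] set_upt)
      also have "\<dots> = sum Zf {2..n}" by (simp only: atLeastLessThanSuc_atLeastAtMost)
      finally show ?thesis using Zf_sum[of n] n0 N_def by simp
    qed
    have cond: "(v \<notin> set (zvals n) \<and> (Suc n + 1) dvd (if Suc n \<ge> 2 then sum_list (drop 2 (zvals n)) + v else 0))
       \<longleftrightarrow> (v \<notin> Zf ` {0..N-1} \<and> Suc N dvd (N * dz (N - 1) + v))" for v
      using N2 unfolding Suc.IH st sm N_def by simp
    have ZN: "Zf N = dz (N - 1) + (if dz N = Suc (dz (N - 1)) then Suc N else 0)"
      using N2 unfolding Zf_def by simp
    have "(LEAST v. v \<notin> set (zvals n) \<and> (Suc n + 1) dvd (if Suc n \<ge> 2 then sum_list (drop 2 (zvals n)) + v else 0)) = Zf N"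
      unfolding cond
    proof (rule Least_equality)
      show "Zf N \<notin> Zf ` {0..N-1} \<and> Suc N dvd (N * dz (N - 1) + Zf N)"
      proof
        show "Zf N \<notin> Zf ` {0..N-1}" using Zf_inj N2 by fastforce
        show "Suc N dvd (N * dz (N - 1) + Zf N)" unfolding Zf_step[OF N2] by (rule dvd_triv_left)
      qed
    next
      fix y assume "y \<notin> Zf ` {0..N-1} \<and> Suc N dvd (N * dz (N - 1) + y)"
      hence ny: "y \<notin> Zf ` {0..N-1}" and dv: "Suc N dvd (N * dz (N - 1) + y)" by auto
      have "dz (N - 1) \<le> g N" using dz_prev[of N] N2 by simp
      also have "g N \<le> N" using g_lt[of N] N2 by simp
      finally have le: "dz (N - 1) \<le> N" .
      from cls[OF dv le] show "Zf N \<le> y"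
      proof
        assume yc: "y = dz (N - 1)"
        show ?thesis
        proof (cases "dz N = Suc (dz (N - 1))")
          case True
          from witness[OF N2 True] obtain i where "i \<le> N - 1" "Zf i = dz (N - 1)" by blast
          hence "y \<in> Zf ` {0..N-1}" using yc by force
          thus ?thesis using ny by blast
        next
          case False thus ?thesis using ZN yc by simp
        qed
      next
        assume "dz (N - 1) + Suc N \<le> y" thus ?thesis using ZN by simp
      qed
    qed
    thus ?thesis using Suc.IH N_def by simp
  qed
qed

lemma zseq_eq: "zseq n = Zf n"
  unfolding zseq_def zvals_eq by simp

lemma eq_iff: assumes "n \<ge> 2" shows "Zf n = Ff n \<longleftrightarrow> isE n"
proof -
  have F: "Ff n = g (n - 1) + 1 + (if jump (n - 1) then n else 0)"
    using FfS[of "n-1"] assms by simp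
  have gl: "g n < n" using g_lt assms by simp
  have gs: "g n = g (n - 1) \<or> g n = Suc (g (n - 1))" using g_step[of "n-1"] assms by simp
  have js: "jump (n - 1) \<longleftrightarrow> g n = Suc (g (n - 1))" unfolding jump_def using assms by simp
  show ?thesis
  proof (cases "isE n")
    case True
    have "jump (n - 1)" using jumpE(1)[OF True] .
    thus ?thesis using Zf_isE(1)[OF True] F js True by simp
  next
    case nE: False
    show ?thesis
    proof (cases "isE (Suc n)")
      case True
      have "Zf n = g n" using Zf_isES(1)[OF True assms] .
      thus ?thesis using F gs js gl nE by auto
    next
      case False
      have "Zf n = g n + (if jump n then Suc n else 0)" using Zf_reg(1)[OF nE False assms] .
      thus ?thesis using F gs js gl nE assms by auto
    qed
  qed
qed

theorem mainTheorem8: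
  fixes n :: nat
  shows "zseq n = fseq n \<longleftrightarrow> (n = 0 \<or> (\<exists>k::nat. n = fib (2 * k + 1)))"
proof -
  have "n = 0 \<or> n = 1 \<or> n \<ge> 2" by auto
  thus ?thesis
  proof (elim disjE)
    assume "n = 0" thus ?thesis using zseq_eq fseq_eq Zf0 by simp
  next
    assume n1: "n = 1"
    have "Ff 1 = 1" using FfS[of 0] g0 not_jump0 by simp
    moreover have "\<exists>k::nat. 1 = fib (2 * k + 1)" by (intro exI[of _ 0]) simp
    ultimately show ?thesis using n1 zseq_eq fseq_eq Zf1 by simp
  next
    assume n2: "n \<ge> 2"
    have "(\<exists>k::nat. n = fib (2 * k + 1)) \<longleftrightarrow> isE n"
    proof
      assume "\<exists>k::nat. n = fib (2 * k + 1)"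
      then obtain k where k: "n = fib (2*k+1)" by blast
      have "k \<noteq> 0" using k n2 by (cases k) auto
      thus "isE n" unfolding isE_def using k by (intro exI[of _ k]) simp
    next
      assume "isE n" thus "\<exists>k::nat. n = fib (2 * k + 1)" unfolding isE_def by blast
    qed
    thus ?thesis using eq_iff[OF n2] n2 zseq_eq fseq_eq by simp
  qed
qed


end
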